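(* Let $\mathbf{A}\in\mathbb{C}^{N\times N}$ be a nonzero matrix (the weighted adjacency matrix of a graph), and let $\lambda_{\max}$ denote an eigenvalue of $\mathbf{A}$ of largest magnitude, i.e. $|\lambda_{\max}|\ge|\lambda|$ for every eigenvalue $\lambda$ of $\mathbf{A}$. Let $\lambda_m,\lambda_n\in\mathbb{R}$ be two distinct real eigenvalues of $\mathbf{A}$ with corresponding eigenvectors $\mathbf{v}_m,\mathbf{v}_n$, normalized so that $\|\mathbf{v}_m\|_1=\|\mathbf{v}_n\|_1=1$. If $\lambda_m<\lambda_n$, then $\mathrm{TV}_G(\mathbf{v}_m)>\mathrm{TV}_G(\mathbf{v}_n)$.
   Context: For a graph signal $\mathbf{s}\in\mathbb{C}^N$, the total variation on the graph is $\mathrm{TV}_G(\mathbf{s})=\|\mathbf{s}-\mathbf{A}^{\mathrm{norm}}\mathbf{s}\|_1$, where $\mathbf{A}^{\mathrm{norm}}=\frac{1}{|\lambda_{\max}|}\mathbf{A}$ is the normalized adjacency matrix. *)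

theory Defs
  imports Complex_Main "Jordan_Normal_Form.Char_Poly"
begin

definition l1_norm :: "complex vec \<Rightarrow> real" where
  "l1_norm s = (\<Sum>i<dim_vec s. cmod (s $ i))"

definition normalized_adj :: "complex mat \<Rightarrow> complex \<Rightarrow> complex mat" where
  "normalized_adj A lmax = complex_of_real (1 / cmod lmax) \<cdot>\<^sub>m A"

definition TV_G :: "complex mat \<Rightarrow> complex \<Rightarrow> complex vec \<Rightarrow> real" where
  "TV_G A lmax s = l1_norm (s - normalized_adj A lmax *\<^sub>v s)"

end

theory Submission
  imports Defs
begin

lemma smult_mat_vec_aux:
  fixes A :: "complex mat"
  assumes "A \<in> carrier_mat n n" "v \<in> carrier_vec n"
  shows "(k \<cdot>\<^sub>m A) *\<^sub>v v = k \<cdot>\<^sub>v (A *\<^sub>v v)"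
  using assms
  by (intro eq_vecI) (auto simp: scalar_prod_def sum_distrib_left algebra_simps)

lemma TV_eig:
  fixes A :: "complex mat" and l :: real
  assumes A: "A \<in> carrier_mat N N"
    and ev: "eigenvector A v (complex_of_real l)"
    and n1: "l1_norm v = 1"
    and le: "\<bar>l\<bar> \<le> cmod lmax" and pos: "cmod lmax > 0"
  shows "TV_G A lmax v = 1 - l / cmod lmax"
proof -
  let ?c = "1 - l / cmod lmax"
  have v: "v \<in> carrier_vec N" and Av: "A *\<^sub>v v = complex_of_real l \<cdot>\<^sub>v v"
    using ev A unfolding eigenvector_def by auto
  have c0: "?c \<ge> 0" using le pos by (simp add: field_simps)
  have eq: "v - normalized_adj A lmax *\<^sub>v v = complex_of_real ?c \<cdot>\<^sub>v v"
    unfolding normalized_adj_def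
    using v A Av smult_mat_vec_aux[OF A v]
    by (intro eq_vecI) (auto simp: algebra_simps)
  have "TV_G A lmax v = (\<Sum>i<dim_vec v. cmod (complex_of_real ?c * v $ i))"
    unfolding TV_G_def eq l1_norm_def by simp
  also have "\<dots> = (\<Sum>i<dim_vec v. ?c * cmod (v $ i))"
  proof (rule sum.cong[OF refl])
    fix i
    have "cmod (complex_of_real ?c) = ?c" using c0 by (simp del: of_real_diff of_real_divide)
    then show "cmod (complex_of_real ?c * v $ i) = ?c * cmod (v $ i)"
      by (simp only: norm_mult)
  qed
  also have "\<dots> = ?c * l1_norm v" unfolding l1_norm_def by (simp add: sum_distrib_left)
  finally show ?thesis using n1 by simp
qed

theorem theorem1:
  fixes A :: "complex mat" and N :: nat and lmax :: complex
    and lm ln :: real and vm vn :: "complex vec"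
  assumes "A \<in> carrier_mat N N"
    and "A \<noteq> 0\<^sub>m N N"
    and "eigenvalue A lmax"
    and "\<forall>l. eigenvalue A l \<longrightarrow> cmod l \<le> cmod lmax"
    and "lm \<noteq> ln"
    and "eigenvector A vm (complex_of_real lm)"
    and "eigenvector A vn (complex_of_real ln)"
    and "l1_norm vm = 1" and "l1_norm vn = 1"
    and "lm < ln"
  shows "TV_G A lmax vm > TV_G A lmax vn"
proof -
  have m: "\<bar>lm\<bar> \<le> cmod lmax" using assms(4,6) unfolding eigenvalue_def by fastforce
  have n: "\<bar>ln\<bar> \<le> cmod lmax" using assms(4,7) unfolding eigenvalue_def by fastforce
  have pos: "cmod lmax > 0" using m n assms(10) by linarith
  show ?thesis
    using TV_eig[OF assms(1) assms(6) assms(8) m pos] TV_eig[OF assms(1) assms(7) assms(9) n pos]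
      assms(10) pos by (simp add: divide_strict_right_mono)
qed

end
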